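(* Let $\kappa>0$ and $0<\gamma\le\pi/2$. Let $S$ be a sessile liquid channel (a $\kappa$-cylindrical surface supported on the horizontal plane $\Pi$) making contact angle $\gamma$, with volume $\mathcal V$. Then every sessile liquid channel resting on $\Pi$ with the same contact angle $\gamma$ and smaller volume can be rigidly translated so that it lies strictly in the interior of the region enclosed by $S$ and $\Pi$.
   Context: For $u_0>0$, $(r(\psi),u(\psi))$, $\psi\in[0,\pi]$, is the solution of $\frac{dr}{d\psi}=\frac{\cos\psi}{\kappa u}$, $\frac{du}{d\psi}=\frac{\sin\psi}{\kappa u}$, $r(0)=0$, $u(0)=u_0$ (profile of a $\kappa$-cylindrical surface parametrized by inclination angle). The channel with parameter $u_0$ and contact angle $\gamma$ has cross-section the planar region bounded by the curve $\{(\pm r(\psi),u(\psi)):0\le\psi\le\gamma\}$ and the segment of the line $u=u(\gamma)$ (the plane $\Pi$) joining its endpoints; its volume per unit length is $\mathcal V=2\big(r(\gamma)u(\gamma)-\frac{\sin\gamma}\kappa\big)$. *)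

theory Defs
  imports "HOL-Analysis.Analysis"
begin

text \<open>(r,u) is the profile of a kappa-cylindrical surface parametrized by the
inclination angle psi in [0,pi], with parameter u0 > 0:
  r' = cos psi / (kappa u),  u' = sin psi / (kappa u),  r(0) = 0, u(0) = u0.\<close>
definition is_profile :: "real \<Rightarrow> real \<Rightarrow> (real \<Rightarrow> real) \<Rightarrow> (real \<Rightarrow> real) \<Rightarrow> bool" where
  "is_profile \<kappa> u0 r u \<longleftrightarrow>
     r 0 = 0 \<and> u 0 = u0 \<and>
     (\<forall>\<psi>\<in>{0..pi}.
        (r has_real_derivative (cos \<psi> / (\<kappa> * u \<psi>))) (at \<psi> within {0..pi}) \<and>
        (u has_real_derivative (sin \<psi> / (\<kappa> * u \<psi>))) (at \<psi> within {0..pi}))"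

text \<open>Cross-section of the channel with contact angle gamma: the planar region bounded
by the curve (+-r(psi), u(psi)), 0 <= psi <= gamma, and the segment of the line
u = u(gamma) joining its endpoints.  For 0 < gamma <= pi/2, u is increasing and r is
nonnegative, so this region is the set of points (x,y) at height y = u(psi) for some
psi in [0,gamma] with |x| <= r(psi).\<close>
definition channel_region :: "(real \<Rightarrow> real) \<Rightarrow> (real \<Rightarrow> real) \<Rightarrow> real \<Rightarrow> (real \<times> real) set" where
  "channel_region r u \<gamma> = {(x, y). \<exists>\<psi>\<in>{0..\<gamma>}. y = u \<psi> \<and> \<bar>x\<bar> \<le> r \<psi>}"

text \<open>Volume per unit length.\<close>
definition channel_volume :: "real \<Rightarrow> (real \<Rightarrow> real) \<Rightarrow> (real \<Rightarrow> real) \<Rightarrow> real \<Rightarrow> real" where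
  "channel_volume \<kappa> r u \<gamma> = 2 * (r \<gamma> * u \<gamma> - sin \<gamma> / \<kappa>)"

end

theory Submission
  imports Defs
begin

lemma prof_basic:
  assumes k: "\<kappa> > 0" and p: "is_profile \<kappa> u0 r u"
  shows "r 0 = 0" "u 0 = u0"
    and "\<And>t. t \<in> {0..pi} \<Longrightarrow> (r has_real_derivative (cos t / (\<kappa> * u t))) (at t within {0..pi})"
    and "\<And>t. t \<in> {0..pi} \<Longrightarrow> (u has_real_derivative (sin t / (\<kappa> * u t))) (at t within {0..pi})"
    and "continuous_on {0..pi} r" "continuous_on {0..pi} u"
    and "\<And>t. t \<in> {0<..<pi} \<Longrightarrow> (r has_real_derivative (cos t / (\<kappa> * u t))) (at t)"
    and "\<And>t. t \<in> {0<..<pi} \<Longrightarrow> (u has_real_derivative (sin t / (\<kappa> * u t))) (at t)"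
proof -
  show "r 0 = 0" "u 0 = u0" using p by (auto simp: is_profile_def)
  show r: "\<And>t. t \<in> {0..pi} \<Longrightarrow> (r has_real_derivative (cos t / (\<kappa> * u t))) (at t within {0..pi})"
    and u: "\<And>t. t \<in> {0..pi} \<Longrightarrow> (u has_real_derivative (sin t / (\<kappa> * u t))) (at t within {0..pi})"
    using p by (auto simp: is_profile_def)
  show "continuous_on {0..pi} r" by (rule DERIV_continuous_on[OF r])
  show "continuous_on {0..pi} u" by (rule DERIV_continuous_on[OF u])
  have i: "t \<in> {0<..<pi} \<Longrightarrow> at t within {0..pi} = at t" for t
    by (rule at_within_interior) auto
  show "\<And>t. t \<in> {0<..<pi} \<Longrightarrow> (r has_real_derivative (cos t / (\<kappa> * u t))) (at t)"
    using r i by (metis greaterThanLessThan_iff atLeastAtMost_iff less_eq_real_def)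
  show "\<And>t. t \<in> {0<..<pi} \<Longrightarrow> (u has_real_derivative (sin t / (\<kappa> * u t))) (at t)"
    using u i by (metis greaterThanLessThan_iff atLeastAtMost_iff less_eq_real_def)
qed

lemma prof_const:
  assumes k: "\<kappa> > 0" and p: "is_profile \<kappa> u0 r u" and t: "0 < t" "t \<le> pi"
    and pos: "\<And>s. 0 \<le> s \<Longrightarrow> s < t \<Longrightarrow> u s > 0"
  shows "(u t)\<^sup>2 = u0\<^sup>2 + 2 * (1 - cos t) / \<kappa>"
proof -
  note b = prof_basic[OF k p]
  define g where "g s = (u s)\<^sup>2 - 2 * (1 - cos s) / \<kappa>" for s
  have "g t = g 0"
  proof (rule DERIV_isconst_end[OF t(1)])
    show "continuous_on {0..t} g" unfolding g_def
      by (intro continuous_intros continuous_on_subset[OF b(6)]) (use t k in auto)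
    fix x assume x: "0 < x" "x < t"
    have ux: "u x > 0" using pos x by auto
    have "(g has_real_derivative (2 * u x * (sin x / (\<kappa> * u x)) - 2 * sin x / \<kappa>)) (at x)"
      unfolding g_def
      using b(8)[of x] x t k ux by (auto intro!: derivative_eq_intros)
    moreover have "2 * u x * (sin x / (\<kappa> * u x)) - 2 * sin x / \<kappa> = 0" using ux k by (simp add: field_simps)
    ultimately show "(g has_real_derivative 0) (at x)" by simp
  qed
  then show ?thesis using b(2) by (simp add: g_def)
qed

lemma prof_u:
  assumes k: "\<kappa> > 0" and u0: "u0 > 0" and p: "is_profile \<kappa> u0 r u" and t: "t \<in> {0..pi}"
  shows "u t = sqrt (u0\<^sup>2 + 2 * (1 - cos t) / \<kappa>)"
proof -
  note b = prof_basic[OF k p]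
  have pos: "\<forall>s\<in>{0..pi}. u s > 0"
  proof (rule ccontr)
    assume neg: "\<not> (\<forall>s\<in>{0..pi}. u s > 0)"
    define Z where "Z = {0..pi} \<inter> u -` {..0}"
    have Zne: "Z \<noteq> {}" using neg by (auto simp: Z_def not_less)
    have Zc: "closed Z" unfolding Z_def by (rule continuous_closed_preimage[OF b(6)]) auto
    have Zb: "bdd_below Z" unfolding Z_def by (rule bdd_belowI[of _ 0]) auto
    define t1 where "t1 = Inf Z"
    have t1Z: "t1 \<in> Z" unfolding t1_def by (rule closed_contains_Inf[OF Zne Zb Zc])
    have low: "s \<in> Z \<Longrightarrow> t1 \<le> s" for s unfolding t1_def by (rule cInf_lower[OF _ Zb])
    have t1ne: "t1 \<noteq> 0" using t1Z b(2) u0 by (auto simp: Z_def)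
    have t1r: "0 < t1" "t1 \<le> pi" using t1Z t1ne by (auto simp: Z_def)
    have before: "0 \<le> s \<Longrightarrow> s < t1 \<Longrightarrow> u s > 0" for s
      using low[of s] t1r by (force simp: Z_def)
    have sq: "(u t1)\<^sup>2 = u0\<^sup>2 + 2 * (1 - cos t1) / \<kappa>" by (rule prof_const[OF k p t1r before])
    have "1 - cos t1 \<ge> 0" by simp
    hence "(u t1)\<^sup>2 > 0" using sq u0 k by (smt (verit) divide_nonneg_pos zero_less_power)
    hence ut1: "u t1 < 0" using t1Z by (auto simp: Z_def)
    obtain x where x: "0 \<le> x" "x \<le> t1" "u x = 0"
      using IVT2'[of u t1 0 0] ut1 b(2) u0 continuous_on_subset[OF b(6)] t1r by force
    have "x \<in> Z" using x t1r by (auto simp: Z_def)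
    then have "x = t1" using low x by force
    then show False using x ut1 by simp
  qed
  show ?thesis
  proof (cases "t = 0")
    case True then show ?thesis using b(2) u0 by simp
  next
    case False
    then have "(u t)\<^sup>2 = u0\<^sup>2 + 2 * (1 - cos t) / \<kappa>"
      using t pos by (intro prof_const[OF k p]) auto
    moreover have "u t > 0" using pos t by auto
    ultimately show ?thesis by (metis abs_of_pos real_sqrt_abs)
  qed
qed

lemma u_pos:
  assumes k: "\<kappa> > 0" and u0: "u0 > 0" and p: "is_profile \<kappa> u0 r u" and t: "t \<in> {0..pi}"
  shows "u t > 0" "u t \<ge> u0" "(u t)\<^sup>2 = u0\<^sup>2 + 2 * (1 - cos t) / \<kappa>"
proof -
  have e: "u t = sqrt (u0\<^sup>2 + 2 * (1 - cos t) / \<kappa>)" by (rule prof_u[OF k u0 p t])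
  have "2 * (1 - cos t) / \<kappa> \<ge> 0" using k by simp
  then show "u t > 0" "u t \<ge> u0" "(u t)\<^sup>2 = u0\<^sup>2 + 2 * (1 - cos t) / \<kappa>"
    unfolding e using u0 by (auto intro!: real_le_rsqrt add_pos_nonneg)
qed

lemma psi_facts:
  assumes k: "\<kappa> > 0" and u0: "u0 > 0" and p: "is_profile \<kappa> u0 r u"
    and g: "0 < \<gamma>" "\<gamma> \<le> pi / 2" and y: "u0 \<le> y" "y \<le> u \<gamma>"
  shows "cos \<gamma> \<le> 1 - \<kappa> * (y\<^sup>2 - u0\<^sup>2) / 2" "1 - \<kappa> * (y\<^sup>2 - u0\<^sup>2) / 2 \<le> 1"
    "0 \<le> arccos (1 - \<kappa> * (y\<^sup>2 - u0\<^sup>2) / 2)" "arccos (1 - \<kappa> * (y\<^sup>2 - u0\<^sup>2) / 2) \<le> \<gamma>"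
    "u (arccos (1 - \<kappa> * (y\<^sup>2 - u0\<^sup>2) / 2)) = y"
proof -
  define z where "z = 1 - \<kappa> * (y\<^sup>2 - u0\<^sup>2) / 2"
  have gpi: "\<gamma> \<in> {0..pi}" using g by auto
  have ug: "(u \<gamma>)\<^sup>2 = u0\<^sup>2 + 2 * (1 - cos \<gamma>) / \<kappa>" by (rule u_pos(3)[OF k u0 p gpi])
  have "y\<^sup>2 \<le> (u \<gamma>)\<^sup>2" using y u0 by (intro power_mono) auto
  moreover have "u0\<^sup>2 \<le> y\<^sup>2" using y u0 by (intro power_mono) auto
  ultimately have a: "cos \<gamma> \<le> z" "z \<le> 1" using k unfolding z_def ug
    by (auto simp: field_simps)
  show "cos \<gamma> \<le> 1 - \<kappa> * (y\<^sup>2 - u0\<^sup>2) / 2" "1 - \<kappa> * (y\<^sup>2 - u0\<^sup>2) / 2 \<le> 1"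
    using a by (auto simp: z_def)
  have cg: "cos \<gamma> \<ge> 0" using g by (intro cos_ge_zero) auto
  have zb: "-1 \<le> z" using a cg by linarith
  show "0 \<le> arccos (1 - \<kappa> * (y\<^sup>2 - u0\<^sup>2) / 2)" using zb a by (simp add: z_def[symmetric] arccos_lbound)
  have "arccos z \<le> arccos (cos \<gamma>)" using a zb cg by (subst arccos_le_mono) auto
  then show "arccos (1 - \<kappa> * (y\<^sup>2 - u0\<^sup>2) / 2) \<le> \<gamma>" using g by (simp add: z_def[symmetric] arccos_cos)
  have "u (arccos z) = sqrt (u0\<^sup>2 + 2 * (1 - cos (arccos z)) / \<kappa>)"
    using zb a by (intro prof_u[OF k u0 p]) (auto simp: arccos_lbound arccos_ubound)
  also have "\<dots> = sqrt (y\<^sup>2)" using zb a k by (simp add: z_def field_simps)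
  also have "\<dots> = y" using y u0 by simp
  finally show "u (arccos (1 - \<kappa> * (y\<^sup>2 - u0\<^sup>2) / 2)) = y" by (simp add: z_def)
qed

lemma r_strict:
  assumes k: "\<kappa> > 0" and u0: "u0 > 0" and p: "is_profile \<kappa> u0 r u"
    and g: "\<gamma> \<le> pi / 2" and st: "0 \<le> s" "s < t" "t \<le> \<gamma>"
  shows "r s < r t"
proof (rule DERIV_pos_imp_increasing_open[OF st(2)])
  note b = prof_basic[OF k p]
  fix x assume x: "s < x" "x < t"
  have "cos x > 0" using x st g by (intro cos_gt_zero_pi) auto
  moreover have "u x > 0" using x st g by (intro u_pos(1)[OF k u0 p]) auto
  ultimately show "\<exists>y. (r has_real_derivative y) (at x) \<and> 0 < y"
    using b(7)[of x] x st g k by (intro exI[of _ "cos x / (\<kappa> * u x)"]) auto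
next
  show "continuous_on {s..t} r"
    by (rule continuous_on_subset[OF prof_basic(5)[OF k p]]) (use st g pi_gt_zero in auto)
qed

lemma vol_mono:
  assumes k: "\<kappa> > 0" and a: "a > 0" and p: "is_profile \<kappa> a r u"
    and b: "b > 0" and q: "is_profile \<kappa> b rs us" and ba: "b \<le> a"
    and g: "0 < \<gamma>" "\<gamma> \<le> pi / 2"
  shows "channel_volume \<kappa> r u \<gamma> \<le> channel_volume \<kappa> rs us \<gamma>"
proof -
  note P = prof_basic[OF k p] and Q = prof_basic[OF k q]
  define F where "F x = rs x * us \<gamma> - r x * u \<gamma>" for x
  have "F 0 \<le> F \<gamma>"
  proof (rule DERIV_nonneg_imp_increasing_open[of 0 \<gamma> F])
    show "0 \<le> \<gamma>" using g by simp
    show "continuous_on {0..\<gamma>} F" unfolding F_def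
      by (intro continuous_intros continuous_on_subset[OF P(5)] continuous_on_subset[OF Q(5)])
         (use g in auto)
  next
    fix x assume x: "0 < x" "x < \<gamma>"
    have xi: "x \<in> {0<..<pi}" using x g by auto
    have xc: "x \<in> {0..pi}" "\<gamma> \<in> {0..pi}" using x g by auto
    have D: "(F has_real_derivative (cos x / (\<kappa> * us x) * us \<gamma> - cos x / (\<kappa> * u x) * u \<gamma>)) (at x)"
      unfolding F_def by (intro derivative_intros DERIV_cmult_right Q(7) P(7) xi)
    define B where "B = 2 * (1 - cos \<gamma>) / \<kappa>"
    define C where "C = 2 * (1 - cos x) / \<kappa>"
    have BC: "C \<le> B" unfolding B_def C_def using k x g
      by (auto intro!: divide_right_mono cos_monotone_0_pi_le)
    have C0: "C \<ge> 0" unfolding C_def using k by simp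
    have e1: "us \<gamma> = sqrt (b\<^sup>2 + B)" "us x = sqrt (b\<^sup>2 + C)"
      "u \<gamma> = sqrt (a\<^sup>2 + B)" "u x = sqrt (a\<^sup>2 + C)"
      unfolding B_def C_def using prof_u[OF k a p] prof_u[OF k b q] xc by auto
    have sq: "b\<^sup>2 \<le> a\<^sup>2" using ba b by (intro power_mono) auto
    have "(a\<^sup>2 + B) * (b\<^sup>2 + C) \<le> (b\<^sup>2 + B) * (a\<^sup>2 + C)"
    proof -
      have "0 \<le> (a\<^sup>2 - b\<^sup>2) * (B - C)" using sq BC by simp
      then show ?thesis by (simp add: algebra_simps)
    qed
    then have "u \<gamma> * us x \<le> us \<gamma> * u x" unfolding e1 real_sqrt_mult[symmetric]
      by (rule real_sqrt_le_mono)
    moreover have pos: "us x > 0" "u x > 0" using u_pos(1)[OF k a p] u_pos(1)[OF k b q] xc by auto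
    moreover have "cos x \<ge> 0" using x g by (intro cos_ge_zero) auto
    ultimately have "cos x / (\<kappa> * u x) * u \<gamma> \<le> cos x / (\<kappa> * us x) * us \<gamma>"
      using k by (auto simp: field_simps intro!: mult_left_mono)
    then show "\<exists>y. (F has_real_derivative y) (at x) \<and> 0 \<le> y" using D by auto
  qed
  then show ?thesis using P(1) Q(1) by (simp add: F_def channel_volume_def)
qed

lemma height_cmp:
  assumes k: "\<kappa> > 0" and a: "a > 0" and p: "is_profile \<kappa> a r u"
    and b: "b > 0" and q: "is_profile \<kappa> b rs us" and ab: "a < b"
    and g: "0 < \<gamma>" "\<gamma> \<le> pi / 2"
  shows "us \<gamma> - b < u \<gamma> - a"
proof -
  have gi: "\<gamma> \<in> {0..pi}" using g by auto
  define B where "B = 2 * (1 - cos \<gamma>) / \<kappa>"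
  have "cos \<gamma> < cos 0" using g by (subst cos_mono_less_eq) auto
  then have "cos \<gamma> < 1" by simp
  then have B: "B > 0" using k by (simp add: B_def)
  have e: "(u \<gamma>)\<^sup>2 = a\<^sup>2 + B" "(us \<gamma>)\<^sup>2 = b\<^sup>2 + B"
    using u_pos(3)[OF k a p gi] u_pos(3)[OF k b q gi] by (auto simp: B_def)
  have pu: "u \<gamma> \<ge> a" "us \<gamma> \<ge> b" using u_pos(2)[OF k a p gi] u_pos(2)[OF k b q gi] by auto
  have "us \<gamma> \<noteq> b" using e B by auto
  then have "us \<gamma> > b" using pu by simp
  have "b\<^sup>2 > a\<^sup>2" using ab a by (intro power_strict_mono) auto
  then have "(us \<gamma>)\<^sup>2 > (u \<gamma>)\<^sup>2" using e by simp
  then have "us \<gamma> > u \<gamma>"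
  proof -
    assume h: "(us \<gamma>)\<^sup>2 > (u \<gamma>)\<^sup>2"
    show ?thesis
    proof (rule ccontr)
      assume "\<not> ?thesis"
      then have "us \<gamma> \<le> u \<gamma>" by simp
      then have "(us \<gamma>)\<^sup>2 \<le> (u \<gamma>)\<^sup>2" using b pu by (intro power_mono) auto
      then show False using h by simp
    qed
  qed
  have h1: "(us \<gamma> - b) * (us \<gamma> + b) = B" using e by (simp add: algebra_simps power2_eq_square)
  have h2: "(u \<gamma> - a) * (u \<gamma> + a) = B" using e by (simp add: algebra_simps power2_eq_square)
  show ?thesis
  proof (rule ccontr)
    assume "\<not> ?thesis"
    then have "u \<gamma> - a \<le> us \<gamma> - b" by simp
    moreover have "u \<gamma> + a < us \<gamma> + b" using \<open>us \<gamma> > u \<gamma>\<close> ab by simp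
    moreover have "u \<gamma> - a \<ge> 0" using pu by simp
    moreover have "us \<gamma> - b > 0" using \<open>us \<gamma> > b\<close> by simp
    ultimately have "(u \<gamma> - a) * (u \<gamma> + a) < (us \<gamma> - b) * (us \<gamma> + b)"
    proof -
      assume h: "u \<gamma> - a \<le> us \<gamma> - b" "u \<gamma> + a < us \<gamma> + b" "u \<gamma> - a \<ge> 0" "us \<gamma> - b > 0"
      have "(u \<gamma> - a) * (u \<gamma> + a) \<le> (us \<gamma> - b) * (u \<gamma> + a)"
        using h a pu by (intro mult_right_mono) auto
      also have "\<dots> < (us \<gamma> - b) * (us \<gamma> + b)" using h by (intro mult_strict_left_mono) auto
      finally show ?thesis .
    qed
    then show False using h1 h2 by simp
  qed
qed

lemma u_mono:
  assumes k: "\<kappa> > 0" and a: "a > 0" and p: "is_profile \<kappa> a r u"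
    and st: "0 \<le> s" "s \<le> t" "t \<le> pi"
  shows "u s \<le> u t"
proof -
  have "cos t \<le> cos s" using st by (intro cos_monotone_0_pi_le) auto
  then have "2 * (1 - cos s) / \<kappa> \<le> 2 * (1 - cos t) / \<kappa>" using k by (intro divide_right_mono) auto
  then show ?thesis using prof_u[OF k a p, of s] prof_u[OF k a p, of t] st by simp
qed

lemma u_gt:
  assumes k: "\<kappa> > 0" and a: "a > 0" and p: "is_profile \<kappa> a r u"
    and t: "0 < t" "t < pi"
  shows "u t > a"
proof -
  have "cos t < cos 0" using t by (subst cos_mono_less_eq) auto
  then have "0 < 2 * (1 - cos t) / \<kappa>" using k by simp
  then have "a\<^sup>2 < a\<^sup>2 + 2 * (1 - cos t) / \<kappa>" by simp
  then have "sqrt (a\<^sup>2) < sqrt (a\<^sup>2 + 2 * (1 - cos t) / \<kappa>)" by (rule real_sqrt_less_mono)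
  then show ?thesis using prof_u[OF k a p, of t] t a by simp
qed

lemma key_cmp:
  assumes k: "\<kappa> > 0" and a: "a > 0" and p: "is_profile \<kappa> a r u"
    and b: "b > 0" and q: "is_profile \<kappa> b rs us" and ab: "a < b"
    and g: "0 < \<gamma>" "\<gamma> \<le> pi / 2" and phi: "0 \<le> \<phi>" "\<phi> \<le> \<gamma>"
  shows "rs \<phi> \<le> r (arccos (1 - \<kappa> * ((us \<phi> - (b - a))\<^sup>2 - a\<^sup>2) / 2))"
proof -
  note P = prof_basic[OF k p] and Q = prof_basic[OF k q]
  define d where "d = b - a"
  define z where "z x = 1 - \<kappa> * ((us x - d)\<^sup>2 - a\<^sup>2) / 2" for x
  define G where "G x = r (arccos (z x)) - rs x" for x
  have hc: "us \<gamma> - b < u \<gamma> - a" by (rule height_cmp[OF k a p b q ab g])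
  have wr: "a \<le> us x - d" "us x - d \<le> u \<gamma>" if "0 \<le> x" "x \<le> \<gamma>" for x
  proof -
    have "us x \<ge> b" using u_pos(2)[OF k b q, of x] that g by auto
    then show "a \<le> us x - d" by (simp add: d_def)
    have "us x \<le> us \<gamma>" using u_mono[OF k b q, of x \<gamma>] that g by auto
    then show "us x - d \<le> u \<gamma>" using hc by (simp add: d_def)
  qed
  note pf = psi_facts[OF k a p g wr]
  have G0: "G 0 = 0" using P(1) Q(1) Q(2) by (simp add: G_def z_def d_def)
  have "G 0 \<le> G \<phi>"
  proof (rule DERIV_nonneg_imp_increasing_open[of 0 \<phi> G])
    show "0 \<le> \<phi>" by fact
    have zc: "continuous_on {0..\<phi>} z" unfolding z_def
      by (intro continuous_intros continuous_on_subset[OF Q(6)]) (use phi g in auto)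
    have zb: "\<forall>x\<in>{0..\<phi>}. -1 \<le> z x \<and> z x \<le> 1"
    proof
      fix x assume x: "x \<in> {0..\<phi>}"
      have "cos \<gamma> \<ge> 0" using g by (intro cos_ge_zero) auto
      then show "-1 \<le> z x \<and> z x \<le> 1" using pf(1,2)[of x] x phi unfolding z_def by force
    qed
    have ac: "continuous_on {0..\<phi>} (\<lambda>x. arccos (z x))"
      by (rule continuous_on_arccos[OF zc zb])
    have "continuous_on {0..\<phi>} (\<lambda>x. r (arccos (z x)))"
    proof (rule continuous_on_compose2[OF P(5) ac])
      show "(\<lambda>x. arccos (z x)) ` {0..\<phi>} \<subseteq> {0..pi}"
        using pf(3,4) phi g unfolding z_def by force
    qed
    then show "continuous_on {0..\<phi>} G" unfolding G_def
      by (intro continuous_intros continuous_on_subset[OF Q(5)]) (use phi g in auto)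
  next
    fix x assume x: "0 < x" "x < \<phi>"
    have xi: "x \<in> {0<..<pi}" using x phi g by auto
    have usx: "us x > 0" "us x > b" using u_pos(1)[OF k b q, of x] u_gt[OF k b q, of x] xi by auto
    define w where "w = us x - d"
    have wa: "w > a" using usx by (simp add: w_def d_def)
    have dz: "(z has_real_derivative (- (w * sin x / us x))) (at x)"
      unfolding z_def using Q(8)[OF xi] k usx
      by (auto intro!: derivative_eq_intros simp: w_def field_simps power2_eq_square)
    have cg: "cos \<gamma> \<ge> 0" using g by (intro cos_ge_zero) auto
    have z1: "z x < 1"
    proof -
      have "a\<^sup>2 < w\<^sup>2" using wa a by (intro power_strict_mono) auto
      then show ?thesis using k by (simp add: z_def w_def)
    qed
    have zm1: "-1 < z x" using pf(1)[of x] x phi cg unfolding z_def by force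
    have zx: "z x \<ge> cos x"
    proof -
      have e: "(us x)\<^sup>2 = b\<^sup>2 + 2 * (1 - cos x) / \<kappa>" using u_pos(3)[OF k b q, of x] xi by auto
      have "w\<^sup>2 - a\<^sup>2 = (us x - b) * (us x - b + 2 * a)" by (simp add: w_def d_def power2_eq_square algebra_simps)
      also have "\<dots> \<le> (us x - b) * (us x + b)" using usx ab by (intro mult_left_mono) auto
      also have "\<dots> = 2 * (1 - cos x) / \<kappa>" using e by (simp add: power2_eq_square algebra_simps)
      finally have "\<kappa> * (w\<^sup>2 - a\<^sup>2) \<le> 2 * (1 - cos x)" using k by (simp add: field_simps)
      then show ?thesis by (simp add: z_def w_def)
    qed
    have psi_pos: "0 < arccos (z x)" using arccos_less_arccos[of "z x" 1] z1 zm1 by simp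
    have psi_le: "arccos (z x) \<le> \<gamma>" using pf(4)[of x] x phi unfolding z_def by force
    have psii: "arccos (z x) \<in> {0<..<pi}" using psi_pos psi_le g by auto
    have uw: "u (arccos (z x)) = w" using pf(5)[of x] x phi unfolding z_def w_def by force
    define S where "S = sqrt (1 - (z x)\<^sup>2)"
    have S0: "S > 0" unfolding S_def using z1 zm1 by (simp add: abs_square_less_1)
    have da: "((\<lambda>x. arccos (z x)) has_real_derivative (inverse (- S) * (- (w * sin x / us x)))) (at x)"
      unfolding S_def by (rule DERIV_chain2[OF DERIV_arccos[OF zm1 z1] dz])
    have dG: "(G has_real_derivative (cos (arccos (z x)) / (\<kappa> * u (arccos (z x))) * (inverse (- S) * (- (w * sin x / us x))) - cos x / (\<kappa> * us x))) (at x)"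
      unfolding G_def by (intro derivative_intros DERIV_chain2[OF P(7)[OF psii] da] Q(7)[OF xi])
    have cx: "cos x \<ge> 0" "sin x \<ge> 0" using x phi g by (auto intro!: cos_ge_zero sin_ge_zero)
    have "S \<le> sin x"
    proof -
      have "(cos x)\<^sup>2 \<le> (z x)\<^sup>2" using zx cx by (intro power_mono) auto
      then have "1 - (z x)\<^sup>2 \<le> (sin x)\<^sup>2" using sin_cos_squared_add[of x] by linarith
      then have "S \<le> sqrt ((sin x)\<^sup>2)" unfolding S_def by (rule real_sqrt_le_mono)
      then show ?thesis using cx by simp
    qed
    then have num: "cos x * S \<le> z x * sin x"
      using cx zx S0 by (meson mult_left_mono mult_right_mono order_trans)
    have "cos (arccos (z x)) / (\<kappa> * u (arccos (z x))) * (inverse (- S) * (- (w * sin x / us x))) - cos x / (\<kappa> * us x)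
        = (z x * sin x - cos x * S) / (\<kappa> * us x * S)"
      using z1 zm1 uw wa a S0 usx k by (simp add: field_simps)
    also have "\<dots> \<ge> 0" using num k usx S0 by simp
    finally show "\<exists>y. (G has_real_derivative y) (at x) \<and> 0 \<le> y" using dG by auto
  qed
  then show ?thesis using G0 by (simp add: G_def z_def d_def)
qed

theorem mainTheorem15:
  fixes \<kappa> \<gamma> u0 u0' :: real and r u r' u' :: "real \<Rightarrow> real"
  assumes "\<kappa> > 0" and "0 < \<gamma>" and "\<gamma> \<le> pi / 2"
    and "u0 > 0" and "is_profile \<kappa> u0 r u"
    and "u0' > 0" and "is_profile \<kappa> u0' r' u'"
    and "channel_volume \<kappa> r' u' \<gamma> < channel_volume \<kappa> r u \<gamma>"
  shows "\<exists>v :: real \<times> real. (\<lambda>p. p + v) ` channel_region r' u' \<gamma> \<subseteq> interior (channel_region r u \<gamma>)"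
proof -
  note k = assms(1) and g = assms(2,3) and a = assms(4) and p = assms(5)
    and b = assms(6) and q = assms(7)
  note P = prof_basic[OF k p] and Q = prof_basic[OF k q]
  have ab: "u0 < u0'"
  proof (rule ccontr)
    assume "\<not> ?thesis"
    then have "u0' \<le> u0" by simp
    from vol_mono[OF k a p b q this g] assms(8) show False by simp
  qed
  define d where "d = u0' - u0"
  define c where "c = ((u \<gamma> - u0) - (u' \<gamma> - u0')) / 2"
  have hc: "u' \<gamma> - u0' < u \<gamma> - u0" by (rule height_cmp[OF k a p b q ab g])
  have c0: "c > 0" using hc by (simp add: c_def)
  define Psi where "Psi y = arccos (1 - \<kappa> * (y\<^sup>2 - u0\<^sup>2) / 2)" for y
  define Oset where "Oset = {p. u0 < snd p \<and> snd p < u \<gamma> \<and> \<bar>fst p\<bar> < r (Psi (snd p))}"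
  note pf = psi_facts[OF k a p g]
  have cg: "cos \<gamma> \<ge> 0" using g by (intro cos_ge_zero) auto
  have OR: "Oset \<subseteq> channel_region r u \<gamma>"
  proof
    fix pt assume "pt \<in> Oset"
    then obtain x y where pt: "pt = (x, y)" "u0 < y" "y < u \<gamma>" "\<bar>x\<bar> < r (Psi y)"
      by (cases pt) (auto simp: Oset_def)
    show "pt \<in> channel_region r u \<gamma>" unfolding channel_region_def pt(1)
      using pf(3,4,5)[of y] pt by (auto simp: Psi_def intro!: bexI[of _ "Psi y"])
  qed
  have Oopen: "open Oset"
  proof -
    define S where "S = (UNIV :: real set) \<times> {u0<..<u \<gamma>}"
    have So: "open S" unfolding S_def by (intro open_Times) auto
    have zc: "continuous_on S (\<lambda>p. 1 - \<kappa> * ((snd p)\<^sup>2 - u0\<^sup>2) / 2)"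
      by (intro continuous_intros) auto
    have zb: "\<forall>p\<in>S. -1 \<le> 1 - \<kappa> * ((snd p)\<^sup>2 - u0\<^sup>2) / 2 \<and> 1 - \<kappa> * ((snd p)\<^sup>2 - u0\<^sup>2) / 2 \<le> 1"
    proof
      fix pt assume "pt \<in> S"
      then have "u0 \<le> snd pt" "snd pt \<le> u \<gamma>" unfolding S_def by auto
      then show "-1 \<le> 1 - \<kappa> * ((snd pt)\<^sup>2 - u0\<^sup>2) / 2 \<and> 1 - \<kappa> * ((snd pt)\<^sup>2 - u0\<^sup>2) / 2 \<le> 1"
        using pf(1,2)[of "snd pt"] cg by linarith
    qed
    have ac: "continuous_on S (\<lambda>p. Psi (snd p))" unfolding Psi_def
      by (rule continuous_on_arccos[OF zc zb])
    have "continuous_on S (\<lambda>p. r (Psi (snd p)))"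
    proof (rule continuous_on_compose2[OF P(5) ac])
      show "(\<lambda>p. Psi (snd p)) ` S \<subseteq> {0..pi}"
      proof
        fix t assume "t \<in> (\<lambda>p. Psi (snd p)) ` S"
        then obtain pt where "pt \<in> S" "t = Psi (snd pt)" by auto
        then have "u0 \<le> snd pt" "snd pt \<le> u \<gamma>" "t = Psi (snd pt)" unfolding S_def by auto
        then show "t \<in> {0..pi}" using pf(3,4)[of "snd pt"] g unfolding Psi_def by auto
      qed
    qed
    then have fc: "continuous_on S (\<lambda>p. r (Psi (snd p)) - \<bar>fst p\<bar>)"
      by (intro continuous_intros)
    have "open (S \<inter> (\<lambda>p. r (Psi (snd p)) - \<bar>fst p\<bar>) -` {0<..})"
      by (rule continuous_open_preimage[OF fc So]) auto
    moreover have "S \<inter> (\<lambda>p. r (Psi (snd p)) - \<bar>fst p\<bar>) -` {0<..} = Oset"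
      unfolding S_def Oset_def by auto
    ultimately show ?thesis by simp
  qed
  have Oint: "Oset \<subseteq> interior (channel_region r u \<gamma>)" by (rule interior_maximal[OF OR Oopen])
  show ?thesis
  proof (intro exI[of _ "(0, c - d)"] subsetI)
    fix pt assume "pt \<in> (\<lambda>p. p + (0, c - d)) ` channel_region r' u' \<gamma>"
    then obtain x \<phi> where ph: "0 \<le> \<phi>" "\<phi> \<le> \<gamma>" "\<bar>x\<bar> \<le> r' \<phi>"
      and pt: "pt = (x, u' \<phi> - d + c)"
      by (auto simp: channel_region_def)
    define w where "w = u' \<phi> - d"
    define y where "y = w + c"
    have w1: "u0 \<le> w" using u_pos(2)[OF k b q, of \<phi>] ph g by (auto simp: w_def d_def)
    have w2: "u' \<phi> \<le> u' \<gamma>" using u_mono[OF k b q, of \<phi> \<gamma>] ph g by auto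
    have y1: "u0 < y" using w1 c0 by (simp add: y_def)
    have y2: "y < u \<gamma>" using w2 hc unfolding y_def w_def c_def d_def by (simp add: field_simps)
    have wle: "w \<le> u \<gamma>" using y2 c0 by (simp add: y_def)
    have kc: "r' \<phi> \<le> r (Psi w)" using key_cmp[OF k a p b q ab g ph(1,2)]
      by (simp add: Psi_def w_def d_def)
    have "Psi w < Psi y"
    proof -
      have "w\<^sup>2 < y\<^sup>2" using w1 a c0 by (intro power_strict_mono) (auto simp: y_def)
      then have "1 - \<kappa> * (y\<^sup>2 - u0\<^sup>2) / 2 < 1 - \<kappa> * (w\<^sup>2 - u0\<^sup>2) / 2" using k by simp
      moreover have "-1 \<le> 1 - \<kappa> * (y\<^sup>2 - u0\<^sup>2) / 2" using pf(1)[of y] y1 y2 cg by simp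
      moreover have "1 - \<kappa> * (w\<^sup>2 - u0\<^sup>2) / 2 \<le> 1" using pf(2)[of w] w1 wle by simp
      ultimately show ?thesis unfolding Psi_def by (intro arccos_less_arccos)
    qed
    moreover have "0 \<le> Psi w" "Psi y \<le> \<gamma>"
      using pf(3)[of w] pf(4)[of y] w1 wle y1 y2 by (auto simp: Psi_def)
    ultimately have "r (Psi w) < r (Psi y)" by (intro r_strict[OF k a p g(2)])
    then have "\<bar>x\<bar> < r (Psi y)" using kc ph by simp
    then have "pt \<in> Oset" using y1 y2 by (simp add: Oset_def pt y_def w_def)
    then show "pt \<in> interior (channel_region r u \<gamma>)" using Oint by auto
  qed
qed

end
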